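(* Let $A$ be an $n\times n$ matrix with non-negative real entries and $\|A\|_{\max} \le 1$, and let $\lambda_{\max}$ be its Perron eigenvalue (spectral radius). Define \[ \gamma := n\lambda_{\max} - \sum_{i,j=1}^n \min\{A_{ij},A_{ji}\} + \sum_{i,j=1}^n\left(1 + \min\{A_{ij},A_{ji}\} - A_{ij}^2 - A_{ji}^2\right). \] Then $\gamma \ge 0$, and any eigenvalue $\mu$ of $A$ with $\mathrm{Im}(\mu) \ne 0$ satisfies \[ |\mu|^2 \le \min\left\{ \frac{n^2 + n\lambda_{\max} - 2\lambda_{\max}^2 - \gamma}{4},\ \lambda_{\max}^2 \right\} \] and \[ \mathrm{Re}(\mu)^2 \le \min\left\{ \frac{n^2 + 3n\lambda_{\max} - 4\lambda_{\max}^2 - \gamma}{8},\ \lambda_{\max}^2 \right\}. \]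
   Context: $\|A\|_{\max}$ denotes the largest absolute value of an entry of $A$. The Perron eigenvalue of a non-negative matrix is its spectral radius, which is an eigenvalue by Perron–Frobenius theory. *)

theory Defs
  imports Complex_Main "Jordan_Normal_Form.Spectral_Radius"
begin

definition lam_max :: "real mat \<Rightarrow> real" where
  "lam_max A = spectral_radius (map_mat complex_of_real A)"

definition gamma_val :: "nat \<Rightarrow> real mat \<Rightarrow> real" where
  "gamma_val n A = real n * lam_max A
     - (\<Sum>i<n. \<Sum>j<n. min (A $$ (i,j)) (A $$ (j,i)))
     + (\<Sum>i<n. \<Sum>j<n. 1 + min (A $$ (i,j)) (A $$ (j,i)) - (A $$ (i,j))^2 - (A $$ (j,i))^2)"

end

theory Submission
  imports Defs
begin


definition mv :: "nat \<Rightarrow> (nat \<Rightarrow> nat \<Rightarrow> 'a::comm_ring_1) \<Rightarrow> (nat \<Rightarrow> 'a) \<Rightarrow> nat \<Rightarrow> 'a" where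
  "mv n M y = (\<lambda>i. \<Sum>j<n. M i j * y j)"

lemma mv_pow_jnf:
  fixes A :: "real mat"
  assumes A: "A \<in> carrier_mat n n" and i: "i < n"
  shows "complex_of_real (((mv n (\<lambda>i j. A $$ (i,j))) ^^ k) y i)
     = (\<Sum>j<n. (map_mat complex_of_real A ^\<^sub>m k) $$ (i,j) * complex_of_real (y j))"
  using i
proof (induction k arbitrary: y i)
  case 0
  have "(\<Sum>j<n. (1\<^sub>m n :: complex mat) $$ (i,j) * complex_of_real (y j)) = (\<Sum>j<n. (if j = i then complex_of_real (y j) else 0))"
    by (rule sum.cong, use 0 in auto)
  also have "\<dots> = complex_of_real (y i)" using 0 by simp
  finally show ?case using A by simp
next
  case (Suc k)
  let ?Ac = "map_mat complex_of_real A"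
  have Ac: "?Ac \<in> carrier_mat n n" using A by simp
  have "complex_of_real ((mv n (\<lambda>i j. A $$ (i,j)) ^^ Suc k) y i)
     = complex_of_real ((mv n (\<lambda>i j. A $$ (i,j)) ^^ k) (mv n (\<lambda>i j. A $$ (i,j)) y) i)"
    by (simp only: funpow_Suc_right o_def)
  also have "\<dots> = (\<Sum>j<n. (?Ac ^\<^sub>m k) $$ (i,j) * complex_of_real (mv n (\<lambda>i j. A $$ (i,j)) y j))"
    using Suc by blast
  also have "\<dots> = (\<Sum>j<n. \<Sum>l<n. (?Ac ^\<^sub>m k) $$ (i,j) * ?Ac $$ (j,l) * complex_of_real (y l))"
    unfolding mv_def using A by (auto simp: sum_distrib_left mult.assoc intro!: sum.cong)
  also have "\<dots> = (\<Sum>l<n. \<Sum>j<n. (?Ac ^\<^sub>m k) $$ (i,j) * ?Ac $$ (j,l) * complex_of_real (y l))"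
    by (rule sum.swap)
  also have "\<dots> = (\<Sum>l<n. (?Ac ^\<^sub>m Suc k) $$ (i,l) * complex_of_real (y l))"
  proof (rule sum.cong[OF refl])
    fix l assume l: "l \<in> {..<n}"
    have "(?Ac ^\<^sub>m Suc k) $$ (i,l) = (\<Sum>j<n. (?Ac ^\<^sub>m k) $$ (i,j) * ?Ac $$ (j,l))"
      using Suc.prems l Ac by (simp add: scalar_prod_def atLeast0LessThan)
    then show "(\<Sum>j<n. (?Ac ^\<^sub>m k) $$ (i,j) * ?Ac $$ (j,l) * complex_of_real (y l)) = (?Ac ^\<^sub>m Suc k) $$ (i,l) * complex_of_real (y l)"
      by (simp add: sum_distrib_right)
  qed
  finally show ?case .
qed



lemma smult_pow_mat:
  assumes B: "(B :: 'a::comm_ring_1 mat) \<in> carrier_mat n n"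
  shows "(c \<cdot>\<^sub>m B) ^\<^sub>m k = (c^k) \<cdot>\<^sub>m (B ^\<^sub>m k)"
proof (induction k)
  case 0 then show ?case using B by (auto intro!: eq_matI)
next
  case (Suc k)
  have "(c \<cdot>\<^sub>m B) ^\<^sub>m Suc k = ((c^k) \<cdot>\<^sub>m (B ^\<^sub>m k)) * (c \<cdot>\<^sub>m B)" using Suc by simp
  also have "\<dots> = (c^k * c) \<cdot>\<^sub>m (B ^\<^sub>m k * B)"
  proof -
    have Bk: "B ^\<^sub>m k \<in> carrier_mat n n" using B by simp
    have "(c^k \<cdot>\<^sub>m (B ^\<^sub>m k)) * (c \<cdot>\<^sub>m B) = c^k \<cdot>\<^sub>m ((B ^\<^sub>m k) * (c \<cdot>\<^sub>m B))"
      using mult_smult_assoc_mat[OF Bk, of "c \<cdot>\<^sub>m B" n "c^k"] B by simp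
    also have "\<dots> = c^k \<cdot>\<^sub>m (c \<cdot>\<^sub>m ((B ^\<^sub>m k) * B))" by (simp add: mult_smult_distrib[OF Bk B])
    also have "\<dots> = (c^k * c) \<cdot>\<^sub>m ((B ^\<^sub>m k) * B)" by (rule eq_matI) auto
    finally show ?thesis .
  qed
  finally show ?case by (simp add: mult.commute)
qed

lemma eigvec_fun:
  assumes A: "(M :: complex mat) \<in> carrier_mat n n" and ev: "eigenvalue M mu"
  shows "\<exists>v :: complex vec. v \<in> carrier_vec n \<and> v \<noteq> 0\<^sub>v n \<and> M *\<^sub>v v = mu \<cdot>\<^sub>v v"
  using ev A unfolding eigenvalue_def eigenvector_def by auto

lemma lam_max_ge:
  assumes A: "A \<in> carrier_mat n n" and n: "n > 0"
    and ev: "eigenvalue (map_mat complex_of_real A) mu"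
  shows "cmod mu \<le> lam_max A"
  unfolding lam_max_def
  by (rule spectral_radius_mem_max(2)[of _ n], use A n ev in \<open>auto simp: spectrum_def\<close>)

lemma lam_max_attained:
  assumes A: "A \<in> carrier_mat n n" and n: "n > 0"
  shows "\<exists>mu. eigenvalue (map_mat complex_of_real A) mu \<and> cmod mu = lam_max A"
  using spectral_radius_mem_max(1)[of "map_mat complex_of_real A" n] A n
  unfolding lam_max_def spectrum_def by auto

lemma lam_max_nonneg:
  assumes A: "A \<in> carrier_mat n n" and n: "n > 0"
  shows "lam_max A \<ge> 0"
  using lam_max_attained[OF A n] norm_ge_zero by metis

lemma growth:
  fixes A :: "real mat"
  assumes A: "A \<in> carrier_mat n n" and n: "n > 0" and s: "s > lam_max A"
  shows "\<exists>C. \<forall>k y i. i < n \<longrightarrow> \<bar>((mv n (\<lambda>i j. A $$ (i,j))) ^^ k) y i\<bar> \<le> C * s^k * (\<Sum>j<n. \<bar>y j\<bar>)"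
proof -
  let ?Ac = "map_mat complex_of_real A"
  have Ac: "?Ac \<in> carrier_mat n n" using A by simp
  have s0: "s > 0" using lam_max_nonneg[OF A n] s by simp
  define B where "B = complex_of_real (1/s) \<cdot>\<^sub>m ?Ac"
  have B: "B \<in> carrier_mat n n" using Ac unfolding B_def by simp
  have AcB: "?Ac = complex_of_real s \<cdot>\<^sub>m B"
    unfolding B_def using s0 Ac by (auto intro!: eq_matI)
  have "spectral_radius B < 1"
  proof -
    obtain be where be: "be \<in> spectrum B" "cmod be = spectral_radius B"
      using spectral_radius_mem_max(1)[OF B n] by auto
    from be(1) obtain v where v: "v \<in> carrier_vec n" "v \<noteq> 0\<^sub>v n" "B *\<^sub>v v = be \<cdot>\<^sub>v v"
      using eigvec_fun[OF B] unfolding spectrum_def by auto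
    have "?Ac *\<^sub>v v = complex_of_real s \<cdot>\<^sub>v (B *\<^sub>v v)"
      unfolding AcB using v(1) B by (intro eq_vecI) auto
    also have "\<dots> = (complex_of_real s * be) \<cdot>\<^sub>v v" using v(3) by (simp add: smult_smult_assoc)
    finally have "?Ac *\<^sub>v v = (complex_of_real s * be) \<cdot>\<^sub>v v" .
    hence "eigenvalue ?Ac (complex_of_real s * be)"
      unfolding eigenvalue_def eigenvector_def using v Ac by auto
    from lam_max_ge[OF A n this] have "s * cmod be \<le> lam_max A" using s0 by (simp add: norm_mult)
    hence "s * cmod be < s * 1" using s by simp
    hence "cmod be < 1" using s0 by simp
    thus ?thesis using be by simp
  qed
  from spectral_radius_jnf_norm_bound_less_1_upper_triangular[OF B this]
  obtain c where c: "\<And>k. norm_bound (B ^\<^sub>m k) c" by auto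
  have pw: "\<And>k. ?Ac ^\<^sub>m k = (complex_of_real s)^k \<cdot>\<^sub>m (B ^\<^sub>m k)"
    unfolding AcB by (rule smult_pow_mat[OF B])
  have ent: "cmod ((?Ac ^\<^sub>m k) $$ (i,j)) \<le> s^k * c" if "i < n" "j < n" for i j k
  proof -
    have "cmod ((?Ac ^\<^sub>m k) $$ (i,j)) = s^k * cmod ((B ^\<^sub>m k) $$ (i,j))"
      unfolding pw using that B s0 by (simp add: norm_mult norm_power)
    also have "\<dots> \<le> s^k * c" using c[of k] that B s0 unfolding norm_bound_def
      by (intro mult_left_mono) auto
    finally show ?thesis .
  qed
  show ?thesis
  proof (intro exI allI impI)
    fix k y i assume i: "i < n"
    have "\<bar>((mv n (\<lambda>i j. A $$ (i,j))) ^^ k) y i\<bar> = cmod (complex_of_real (((mv n (\<lambda>i j. A $$ (i,j))) ^^ k) y i))"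
      by simp
    also have "\<dots> = cmod (\<Sum>j<n. (?Ac ^\<^sub>m k) $$ (i,j) * complex_of_real (y j))"
      using mv_pow_jnf[OF A i] by metis
    also have "\<dots> \<le> (\<Sum>j<n. cmod ((?Ac ^\<^sub>m k) $$ (i,j) * complex_of_real (y j)))"
      by (rule norm_sum)
    also have "\<dots> \<le> (\<Sum>j<n. s^k * c * \<bar>y j\<bar>)"
      using ent i by (intro sum_mono) (simp add: norm_mult mult_right_mono)
    also have "\<dots> = c * s^k * (\<Sum>j<n. \<bar>y j\<bar>)" by (simp add: sum_distrib_left mult_ac)
    finally show "\<bar>((mv n (\<lambda>i j. A $$ (i,j))) ^^ k) y i\<bar> \<le> c * s^k * (\<Sum>j<n. \<bar>y j\<bar>)" .
  qed
qed



lemma mv_cong: "(\<And>j. j < n \<Longrightarrow> f j = g j) \<Longrightarrow> mv n M f i = mv n M g i"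
  unfolding mv_def by (auto intro!: sum.cong)

lemma mvpow_cong:
  assumes "\<And>j. j < n \<Longrightarrow> f j = g j" "i < n"
  shows "(mv n M ^^ k) f i = (mv n M ^^ k) g i"
  using assms
proof (induction k arbitrary: f g)
  case 0 then show ?case by simp
next
  case (Suc k)
  have "(mv n M ^^ Suc k) f i = (mv n M ^^ k) (mv n M f) i" by (simp only: funpow_Suc_right o_def)
  also have "mv n M f = mv n M g" using Suc.prems(1) by (intro ext mv_cong) auto
  also have "(mv n M ^^ k) (mv n M g) i = (mv n M ^^ Suc k) g i" by (simp only: funpow_Suc_right o_def)
  finally show ?case .
qed

lemma mv_lin: "mv n M (\<lambda>j. c * f j + d * g j) = (\<lambda>i. c * mv n M f i + d * mv n M g i)"
  unfolding mv_def by (auto simp: algebra_simps sum.distrib sum_distrib_left intro!: ext)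

lemma mvpow_lin: "(mv n M ^^ k) (\<lambda>j. c * f j + d * g j) = (\<lambda>i. c * (mv n M ^^ k) f i + d * (mv n M ^^ k) g i)"
proof (induction k arbitrary: f g)
  case 0 then show ?case by simp
next
  case (Suc k)
  have "(mv n M ^^ Suc k) (\<lambda>j. c * f j + d * g j) = (mv n M ^^ k) (mv n M (\<lambda>j. c * f j + d * g j))"
    by (simp only: funpow_Suc_right o_def)
  also have "\<dots> = (mv n M ^^ k) (\<lambda>i. c * mv n M f i + d * mv n M g i)" by (simp only: mv_lin)
  also have "\<dots> = (\<lambda>i. c * (mv n M ^^ k) (mv n M f) i + d * (mv n M ^^ k) (mv n M g) i)" by (rule Suc)
  finally show ?case by (simp only: funpow_Suc_right o_def)
qed

lemma mv_mono:
  fixes M :: "nat \<Rightarrow> nat \<Rightarrow> real"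
  assumes "\<And>i j. i < n \<Longrightarrow> j < n \<Longrightarrow> 0 \<le> M i j" "\<And>j. j < n \<Longrightarrow> f j \<le> g j" "i < n"
  shows "mv n M f i \<le> mv n M g i"
  unfolding mv_def using assms by (intro sum_mono mult_left_mono) auto

lemma mvpow_mono:
  fixes M :: "nat \<Rightarrow> nat \<Rightarrow> real"
  assumes "\<And>i j. i < n \<Longrightarrow> j < n \<Longrightarrow> 0 \<le> M i j" "\<And>j. j < n \<Longrightarrow> f j \<le> g j" "i < n"
  shows "(mv n M ^^ k) f i \<le> (mv n M ^^ k) g i"
  using assms(2,3)
proof (induction k arbitrary: f g i)
  case 0 then show ?case by simp
next
  case (Suc k)
  have "(mv n M ^^ Suc k) f i = (mv n M ^^ k) (mv n M f) i" by (simp only: funpow_Suc_right o_def)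
  also have "\<dots> \<le> (mv n M ^^ k) (mv n M g) i"
    by (rule Suc.IH) (auto intro!: mv_mono assms(1) Suc.prems)
  also have "\<dots> = (mv n M ^^ Suc k) g i" by (simp only: funpow_Suc_right o_def)
  finally show ?case .
qed

lemma mvpow_smult: "(mv n M ^^ k) (\<lambda>j. c * f j) = (\<lambda>i. c * (mv n M ^^ k) f i)"
  using mvpow_lin[where c=c and d=0 and g=f and f=f] by simp

lemma mvpow_add: "(mv n M ^^ k) (\<lambda>j. f j + g j) = (\<lambda>i. (mv n M ^^ k) f i + (mv n M ^^ k) g i)"
  using mvpow_lin[where c=1 and d=1 and g=g and f=f] by simp

lemma mat_vec_fun:
  assumes "P \<in> carrier_mat n n" "i < n"
  shows "(P *\<^sub>v vec n y) $ i = mv n (\<lambda>i j. P $$ (i,j)) y i"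
  using assms unfolding mv_def by (simp add: scalar_prod_def atLeast0LessThan row_def)

lemma fun_inverse:
  fixes m :: "nat \<Rightarrow> nat \<Rightarrow> 'a::field"
  assumes ker: "\<And>y. (\<And>i. i < n \<Longrightarrow> mv n m y i = 0) \<Longrightarrow> (\<And>i. i < n \<Longrightarrow> y i = 0)"
  shows "\<exists>N. (\<forall>y i. i < n \<longrightarrow> mv n N (mv n m y) i = y i) \<and> (\<forall>y i. i < n \<longrightarrow> mv n m (mv n N y) i = y i)"
proof -
  define M where "M = mat n n (\<lambda>(i,j). m i j)"
  have M: "M \<in> carrier_mat n n" unfolding M_def by simp
  have Mf: "(\<lambda>i j. M $$ (i,j)) i j = m i j" if "i < n" "j < n" for i j using that unfolding M_def by simp
  have mvM: "mv n (\<lambda>i j. M $$ (i,j)) y i = mv n m y i" if "i < n" for y i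
    unfolding mv_def using that Mf by (auto intro!: sum.cong)
  have "det M \<noteq> 0"
  proof
    assume "det M = 0"
    then obtain v where v: "v \<in> carrier_vec n" "v \<noteq> 0\<^sub>v n" "M *\<^sub>v v = 0\<^sub>v n"
      using det_0_iff_vec_prod_zero_field[OF M] by auto
    have vv: "v = vec n (\<lambda>i. v $ i)" using v(1) by auto
    have "mv n m (\<lambda>i. v $ i) i = 0" if "i < n" for i
    proof -
      have "(M *\<^sub>v vec n (\<lambda>i. v $ i)) $ i = 0" using v(3) vv that by simp
      then show ?thesis using mat_vec_fun[OF M that] mvM[OF that] by simp
    qed
    hence "\<And>i. i < n \<Longrightarrow> v $ i = 0" using ker by blast
    hence "v = 0\<^sub>v n" using v(1) by (intro eq_vecI) auto
    with v(2) show False by simp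
  qed
  from det_non_zero_imp_unit[OF M this, of "()"]
  obtain B where B: "B \<in> carrier_mat n n" "B * M = 1\<^sub>m n" "M * B = 1\<^sub>m n"
    unfolding Units_def ring_mat_def by auto
  show ?thesis
  proof (intro exI[of _ "\<lambda>i j. B $$ (i,j)"] conjI allI impI)
    fix y i assume i: "i < n"
    have "vec n (\<lambda>i. y i) = (B * M) *\<^sub>v vec n y" using B(2) by auto
    also have "\<dots> = B *\<^sub>v (M *\<^sub>v vec n y)" by (rule assoc_mult_mat_vec[OF B(1) M], simp)
    also have "M *\<^sub>v vec n y = vec n (mv n m y)" using mat_vec_fun[OF M] mvM M by (intro eq_vecI) auto
    finally have "vec n y = B *\<^sub>v vec n (mv n m y)" by simp
    from arg_cong[OF this, of "\<lambda>v. v $ i"] show "mv n (\<lambda>i j. B $$ (i,j)) (mv n m y) i = y i"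
      using mat_vec_fun[OF B(1) i] i by simp
  next
    fix y i assume i: "i < n"
    have "vec n (\<lambda>i. y i) = (M * B) *\<^sub>v vec n y" using B(3) by auto
    also have "\<dots> = M *\<^sub>v (B *\<^sub>v vec n y)" by (rule assoc_mult_mat_vec[OF M B(1)], simp)
    also have "B *\<^sub>v vec n y = vec n (mv n (\<lambda>i j. B $$ (i,j)) y)" using mat_vec_fun[OF B(1)] B by (intro eq_vecI) auto
    finally have "vec n y = M *\<^sub>v vec n (mv n (\<lambda>i j. B $$ (i,j)) y)" by simp
    from arg_cong[OF this, of "\<lambda>v. v $ i"] show "mv n m (mv n (\<lambda>i j. B $$ (i,j)) y) i = y i"
      using mat_vec_fun[OF M i] mvM[OF i] i by simp
  qed
qed



lemma mv_shift:
  assumes "i < n"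
  shows "mv n (\<lambda>i j. (if i = j then t else 0) - M i j) y i = t * y i - mv n M y i"
proof -
  have "mv n (\<lambda>i j. (if i = j then t else 0) - M i j) y i = (\<Sum>j<n. (if i = j then t * y j else 0)) - mv n M y i"
  proof -
    have "(\<Sum>j<n. ((if i = j then t else 0) - M i j) * y j) = (\<Sum>j<n. (if i = j then t * y j else 0) - M i j * y j)"
      by (rule sum.cong) (auto simp: algebra_simps)
    then show ?thesis unfolding mv_def by (simp only: sum_subtractf)
  qed
  also have "(\<Sum>j<n. (if i = j then t * y j else 0)) = t * y i" using assms by (simp add: sum.delta)
  finally show ?thesis .
qed

lemma real_eig:
  fixes A :: "real mat"
  assumes A: "A \<in> carrier_mat n n" and w: "i0 < n" "w i0 \<noteq> 0"
    and ev: "\<And>i. i < n \<Longrightarrow> mv n (\<lambda>i j. A $$ (i,j)) w i = c * w i"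
  shows "eigenvalue (map_mat complex_of_real A) (complex_of_real c)"
proof -
  let ?Ac = "map_mat complex_of_real A"
  have Ac: "?Ac \<in> carrier_mat n n" using A by simp
  define v where "v = vec n (\<lambda>i. complex_of_real (w i))"
  have v: "v \<in> carrier_vec n" unfolding v_def by simp
  have v0: "v \<noteq> 0\<^sub>v n"
  proof
    assume "v = 0\<^sub>v n"
    hence "v $ i0 = 0" using w by simp
    thus False using w unfolding v_def by simp
  qed
  have "?Ac *\<^sub>v v = complex_of_real c \<cdot>\<^sub>v v"
  proof (rule eq_vecI)
    fix i assume "i < dim_vec (complex_of_real c \<cdot>\<^sub>v v)"
    hence i: "i < n" unfolding v_def by simp
    have "(?Ac *\<^sub>v v) $ i = mv n (\<lambda>i j. ?Ac $$ (i,j)) (\<lambda>i. complex_of_real (w i)) i"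
      unfolding v_def by (rule mat_vec_fun[OF Ac i])
    also have "\<dots> = complex_of_real (mv n (\<lambda>i j. A $$ (i,j)) w i)"
      unfolding mv_def using A i by simp
    also have "\<dots> = complex_of_real c * v $ i" using ev[OF i] i unfolding v_def by simp
    finally show "(?Ac *\<^sub>v v) $ i = (complex_of_real c \<cdot>\<^sub>v v) $ i" using i v by simp
  qed (use v Ac in auto)
  thus ?thesis unfolding eigenvalue_def eigenvector_def using v v0 Ac by auto
qed

lemma pf_subinv:
  fixes A :: "real mat"
  assumes A: "A \<in> carrier_mat n n" and n: "n > 0"
    and nn: "\<And>i j. i < n \<Longrightarrow> j < n \<Longrightarrow> 0 \<le> A $$ (i,j)"
    and x0: "\<And>j. j < n \<Longrightarrow> 0 \<le> x j" and xi: "i1 < n" "x i1 \<noteq> 0"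
    and sub: "\<And>i. i < n \<Longrightarrow> lam_max A * x i \<le> mv n (\<lambda>i j. A $$ (i,j)) x i"
  shows "\<exists>w. (\<exists>i<n. w i \<noteq> 0) \<and> (\<forall>i<n. mv n (\<lambda>i j. A $$ (i,j)) w i = lam_max A * w i)"
proof (rule ccontr)
  assume H: "\<not> ?thesis"
  define r where "r = lam_max A"
  define a where "a = (\<lambda>i j. A $$ (i,j))"
  have r0: "r \<ge> 0" unfolding r_def by (rule lam_max_nonneg[OF A n])
  have a0: "\<And>i j. i < n \<Longrightarrow> j < n \<Longrightarrow> 0 \<le> a i j" unfolding a_def by (rule nn)
  define m where "m = (\<lambda>i j. (if i = j then r else 0) - a i j)"
  have kerm: "\<And>i. i < n \<Longrightarrow> y i = 0" if "\<And>i. i < n \<Longrightarrow> mv n m y i = 0" for y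
  proof -
    have "\<forall>i<n. mv n a y i = r * y i" using that mv_shift[of _ n r a y] unfolding m_def by force
    thus "\<And>i. i < n \<Longrightarrow> y i = 0" using H unfolding a_def r_def by blast
  qed
  obtain N where N: "\<And>y i. i < n \<Longrightarrow> mv n N (mv n m y) i = y i"
    using fun_inverse[of n m] kerm by blast
  define K where "K = 1 + (\<Sum>i<n. \<Sum>j<n. \<bar>N i j\<bar>)"
  have K1: "K \<ge> 1" unfolding K_def by (simp add: sum_nonneg)
  define t where "t = r + 1 / (2 * K)"
  have tr: "t > r" unfolding t_def using K1 by simp
  have t0: "t > 0" using tr r0 by simp
  have trK: "(t - r) * K = 1/2" unfolding t_def using K1 by simp
  define mt where "mt = (\<lambda>i j. (if i = j then t else 0) - a i j)"
  have kermt: "\<And>i. i < n \<Longrightarrow> y i = 0" if "\<And>i. i < n \<Longrightarrow> mv n mt y i = 0" for y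
  proof (rule ccontr)
    fix i assume i: "i < n" "y i \<noteq> 0"
    have "\<And>i. i < n \<Longrightarrow> mv n a y i = t * y i" using that mv_shift[of _ n t a y] unfolding mt_def by force
    from real_eig[OF A i(1), where w=y and c=t] i(2) this have "eigenvalue (map_mat complex_of_real A) (complex_of_real t)"
      unfolding a_def by blast
    from lam_max_ge[OF A n this] have "t \<le> r" using t0 unfolding r_def by simp
    with tr show False by simp
  qed
  obtain R where R: "\<And>y i. i < n \<Longrightarrow> mv n mt (mv n R y) i = y i"
    using fun_inverse[of n mt] kermt by blast
  define w where "w = mv n R x"
  have wt: "t * w i - mv n a w i = x i" if "i < n" for i
    using R[OF that, of x] mv_shift[OF that, of t a w] unfolding w_def mt_def by simp
  have weq: "w i = (1/t) * x i + (1/t) * mv n a w i" if "i < n" for i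
    using wt[OF that] t0 by (simp add: field_simps)
  have iter: "w i = (\<Sum>k<NN. (mv n a ^^ k) x i / t^(k+1)) + (mv n a ^^ NN) w i / t^NN" if i: "i < n" for NN i
    using i
  proof (induction NN arbitrary: i)
    case 0 then show ?case by simp
  next
    case (Suc NN)
    have "(mv n a ^^ NN) w i = (mv n a ^^ NN) (\<lambda>j. (1/t) * x j + (1/t) * mv n a w j) i"
      by (rule mvpow_cong[OF weq Suc.prems])
    also have "\<dots> = (1/t) * (mv n a ^^ NN) x i + (1/t) * (mv n a ^^ NN) (mv n a w) i"
      by (simp only: mvpow_lin)
    also have "(mv n a ^^ NN) (mv n a w) = (mv n a ^^ Suc NN) w" by (simp only: funpow_Suc_right o_def)
    finally have e: "(mv n a ^^ NN) w i = (1/t) * (mv n a ^^ NN) x i + (1/t) * (mv n a ^^ Suc NN) w i" .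
    have "w i = (\<Sum>k<NN. (mv n a ^^ k) x i / t^(k+1)) + (mv n a ^^ NN) w i / t^NN" using Suc by blast
    also have "\<dots> = (\<Sum>k<Suc NN. (mv n a ^^ k) x i / t^(k+1)) + (mv n a ^^ Suc NN) w i / t^Suc NN"
      unfolding e using t0 by (simp add: field_simps)
    finally show ?case .
  qed
  have low: "r^k * x i \<le> (mv n a ^^ k) x i" if "i < n" for k i
    using that
  proof (induction k arbitrary: i)
    case 0 then show ?case by simp
  next
    case (Suc k)
    have "r^Suc k * x i = r * (r^k * x i)" by simp
    also have "\<dots> \<le> r * (mv n a ^^ k) x i" using Suc r0 by (intro mult_left_mono) auto
    also have "\<dots> = (mv n a ^^ k) (\<lambda>j. r * x j) i" by (simp only: mvpow_smult)
    also have "\<dots> \<le> (mv n a ^^ k) (mv n a x) i"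
      by (rule mvpow_mono[OF a0 _ Suc.prems]) (use sub in \<open>auto simp: a_def r_def\<close>)
    also have "\<dots> = (mv n a ^^ Suc k) x i" by (simp only: funpow_Suc_right o_def)
    finally show ?case .
  qed
  define s where "s = (r + t) / 2"
  have s: "s > lam_max A" "s < t" "s > 0" using tr r0 unfolding s_def r_def by auto
  obtain C where C: "\<And>k y i. i < n \<Longrightarrow> \<bar>(mv n a ^^ k) y i\<bar> \<le> C * s^k * (\<Sum>j<n. \<bar>y j\<bar>)"
    using growth[OF A n s(1)] unfolding a_def by blast
  define W where "W = (\<Sum>j<n. \<bar>w j\<bar>)"
  have wlow: "x i / (t - r) \<le> w i" if i: "i < n" for i
  proof -
    define b where "b = (\<lambda>NN. (x i / t) * (\<Sum>k<NN. (r/t)^k) - C * W * (s/t)^NN)"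
    have bw: "b NN \<le> w i" for NN
    proof -
      have "(x i / t) * (\<Sum>k<NN. (r/t)^k) = (\<Sum>k<NN. r^k * x i / t^(k+1))"
        by (simp add: sum_distrib_left power_divide field_simps)
      also have "\<dots> \<le> (\<Sum>k<NN. (mv n a ^^ k) x i / t^(k+1))"
        using low[OF i] t0 by (intro sum_mono divide_right_mono) auto
      finally have 1: "(x i / t) * (\<Sum>k<NN. (r/t)^k) \<le> (\<Sum>k<NN. (mv n a ^^ k) x i / t^(k+1))" .
      have "\<bar>(mv n a ^^ NN) w i\<bar> \<le> C * s^NN * W" using C[OF i] unfolding W_def by blast
      hence "- (C * s^NN * W) / t^NN \<le> (mv n a ^^ NN) w i / t^NN"
        using t0 by (intro divide_right_mono) auto
      moreover have "- (C * s^NN * W) / t^NN = - (C * W * (s/t)^NN)" by (simp add: power_divide)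
      ultimately have 2: "- (C * W * (s/t)^NN) \<le> (mv n a ^^ NN) w i / t^NN" by simp
      show ?thesis using 1 2 iter[OF i, of NN] unfolding b_def by linarith
    qed
    have "(\<lambda>NN. (r/t)^NN) sums (1 / (1 - r/t))"
      by (rule geometric_sums) (use r0 tr t0 in auto)
    hence h1: "(\<lambda>NN. \<Sum>k<NN. (r/t)^k) \<longlonglongrightarrow> 1 / (1 - r/t)" by (simp add: sums_def)
    have h2: "(\<lambda>NN. (s/t)^NN) \<longlonglongrightarrow> 0"
    proof (rule LIMSEQ_power_zero)
      have "s / t < 1" "0 \<le> s / t" using s t0 by auto
      thus "norm (s / t) < 1" by simp
    qed
    have "b \<longlonglongrightarrow> (x i / t) * (1 / (1 - r/t)) - C * W * 0"
      unfolding b_def by (rule tendsto_diff[OF tendsto_mult[OF tendsto_const h1] tendsto_mult[OF tendsto_const h2]])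
    moreover have "(x i / t) * (1 / (1 - r/t)) - C * W * 0 = x i / (t - r)"
      using t0 tr by (simp add: field_simps)
    ultimately have "b \<longlonglongrightarrow> x i / (t - r)" by metis
    then show ?thesis by (rule LIMSEQ_le_const2) (use bw in auto)
  qed
  define u where "u = (\<lambda>j. (t - r) * w j)"
  have ux: "x j \<le> u j" if "j < n" for j
    using wlow[OF that] tr unfolding u_def by (simp add: field_simps)
  have mu: "mv n m u i = (t - r) * (x i - u i)" if i: "i < n" for i
  proof -
    have "mv n m u i = r * u i - mv n a u i" unfolding m_def by (rule mv_shift[OF i])
    also have "mv n a u i = (t - r) * mv n a w i" unfolding u_def mv_def by (simp add: sum_distrib_left mult_ac)
    finally show ?thesis using wt[OF i] unfolding u_def by (simp add: algebra_simps)
  qed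
  have ueq: "u i = (\<Sum>j<n. N i j * ((t - r) * (x j - u j)))" if i: "i < n" for i
  proof -
    have "u i = mv n N (mv n m u) i" using N[OF i] by simp
    also have "\<dots> = mv n N (\<lambda>j. (t - r) * (x j - u j)) i" by (rule mv_cong) (use mu in auto)
    finally show ?thesis unfolding mv_def .
  qed
  define mx where "mx = Max (u ` {..<n})"
  have fin: "finite (u ` {..<n})" and ne: "u ` {..<n} \<noteq> {}" using n by auto
  obtain i0 where i0: "i0 < n" "u i0 = mx" using Max_in[OF fin ne] unfolding mx_def by auto
  have umx: "u j \<le> mx" if "j < n" for j unfolding mx_def using that fin by auto
  have u0: "0 \<le> u j" if "j < n" for j using ux[OF that] x0[OF that] by simp
  have "mx = u i0" using i0 by simp
  also have "\<dots> \<le> \<bar>\<Sum>j<n. N i0 j * ((t - r) * (x j - u j))\<bar>" using ueq[OF i0(1)] by simp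
  also have "\<dots> \<le> (\<Sum>j<n. \<bar>N i0 j * ((t - r) * (x j - u j))\<bar>)" by (rule sum_abs)
  also have "\<dots> \<le> (\<Sum>j<n. \<bar>N i0 j\<bar> * ((t - r) * mx))"
  proof (rule sum_mono)
    fix j assume j: "j \<in> {..<n}"
    have "\<bar>x j - u j\<bar> \<le> mx" using ux[of j] x0[of j] umx[of j] j by auto
    hence "\<bar>(t - r) * (x j - u j)\<bar> \<le> (t - r) * mx" using tr by (simp add: abs_mult)
    thus "\<bar>N i0 j * ((t - r) * (x j - u j))\<bar> \<le> \<bar>N i0 j\<bar> * ((t - r) * mx)"
      by (simp add: abs_mult mult_left_mono)
  qed
  also have "\<dots> = (\<Sum>j<n. \<bar>N i0 j\<bar>) * ((t - r) * mx)" by (simp add: sum_distrib_right)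
  also have "\<dots> \<le> K * ((t - r) * mx)"
  proof (rule mult_right_mono)
    have "(\<Sum>j<n. \<bar>N i0 j\<bar>) \<le> (\<Sum>i<n. \<Sum>j<n. \<bar>N i j\<bar>)"
      by (rule member_le_sum[where f = "\<lambda>i. \<Sum>j<n. \<bar>N i j\<bar>"]) (use i0 in \<open>auto intro: sum_nonneg\<close>)
    thus "(\<Sum>j<n. \<bar>N i0 j\<bar>) \<le> K" unfolding K_def by simp
    show "0 \<le> (t - r) * mx" using tr u0[OF i0(1)] i0 by simp
  qed
  also have "\<dots> = ((t - r) * K) * mx" by (simp add: algebra_simps)
  also have "\<dots> = mx / 2" using trK by simp
  finally have "mx \<le> 0" by simp
  hence "u i1 \<le> 0" using umx[OF xi(1)] by simp
  hence "x i1 \<le> 0" using ux[OF xi(1)] by simp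
  with x0[OF xi(1)] xi(2) show False by simp
qed



lemma pf_main:
  fixes A :: "real mat"
  assumes A: "A \<in> carrier_mat n n" and n: "n > 0"
    and nn: "\<And>i j. i < n \<Longrightarrow> j < n \<Longrightarrow> 0 \<le> A $$ (i,j)"
  shows "\<exists>w. (\<exists>i<n. w i \<noteq> 0) \<and> (\<forall>i<n. mv n (\<lambda>i j. A $$ (i,j)) w i = lam_max A * w i)"
proof -
  let ?Ac = "map_mat complex_of_real A"
  have Ac: "?Ac \<in> carrier_mat n n" using A by simp
  obtain mu where mu: "eigenvalue ?Ac mu" "cmod mu = lam_max A" using lam_max_attained[OF A n] by blast
  obtain v where v: "v \<in> carrier_vec n" "v \<noteq> 0\<^sub>v n" "?Ac *\<^sub>v v = mu \<cdot>\<^sub>v v"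
    using eigvec_fun[OF Ac mu(1)] by blast
  define x where "x = (\<lambda>j. cmod (v $ j))"
  obtain i1 where i1: "i1 < n" "v $ i1 \<noteq> 0"
  proof (rule ccontr)
    assume "\<not> thesis"
    with that have "\<And>i. i < n \<Longrightarrow> v $ i = 0" by blast
    hence "v = 0\<^sub>v n" using v(1) by (intro eq_vecI) auto
    with v(2) show False by simp
  qed
  have vv: "v = vec n (\<lambda>j. v $ j)" using v(1) by auto
  have sub: "lam_max A * x i \<le> mv n (\<lambda>i j. A $$ (i,j)) x i" if i: "i < n" for i
  proof -
    have "lam_max A * x i = cmod (mu * v $ i)" unfolding x_def mu(2)[symmetric] by (simp add: norm_mult)
    also have "mu * v $ i = (?Ac *\<^sub>v v) $ i" using v i by simp
    also have "\<dots> = mv n (\<lambda>i j. ?Ac $$ (i,j)) (\<lambda>j. v $ j) i" using mat_vec_fun[OF Ac i, of "\<lambda>j. v $ j"] vv by simp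
    also have "\<dots> = (\<Sum>j<n. complex_of_real (A $$ (i,j)) * v $ j)" unfolding mv_def using A i by simp
    also have "cmod \<dots> \<le> (\<Sum>j<n. cmod (complex_of_real (A $$ (i,j)) * v $ j))" by (rule norm_sum)
    also have "\<dots> = mv n (\<lambda>i j. A $$ (i,j)) x i" unfolding mv_def x_def
      using nn i by (auto simp: norm_mult intro!: sum.cong)
    finally show ?thesis .
  qed
  show ?thesis
    by (rule pf_subinv[OF A n nn _ i1(1) _ sub]) (auto simp: x_def i1)
qed

lemma pf_eig:
  fixes A :: "real mat"
  assumes A: "A \<in> carrier_mat n n" and n: "n > 0"
    and nn: "\<And>i j. i < n \<Longrightarrow> j < n \<Longrightarrow> 0 \<le> A $$ (i,j)"
  shows "eigenvalue (map_mat complex_of_real A) (complex_of_real (lam_max A))"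
  using pf_main[OF A n nn] real_eig[OF A] by blast

lemma cs_sum:
  fixes f :: "nat \<Rightarrow> real"
  shows "(\<Sum>i<n. f i)^2 \<le> real n * (\<Sum>i<n. (f i)^2)"
proof -
  have "0 \<le> (\<Sum>i<n. \<Sum>j<n. (f i - f j)^2)" by (intro sum_nonneg) auto
  also have "\<dots> = (\<Sum>i<n. \<Sum>j<n. (f i)^2 + (f j)^2 - 2 * f i * f j)"
    by (simp add: power2_eq_square algebra_simps)
  also have "\<dots> = 2 * (real n * (\<Sum>i<n. (f i)^2)) - 2 * (\<Sum>i<n. f i)^2"
    by (simp add: sum.distrib sum_subtractf sum_distrib_left sum_distrib_right power2_eq_square mult_ac)
  finally show ?thesis by simp
qed

lemma mv_sym:
  assumes "\<And>i j. i < n \<Longrightarrow> j < n \<Longrightarrow> b i j = b j i"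
  shows "(\<Sum>i<n. y i * mv n b z i) = (\<Sum>i<n. mv n b y i * z i)"
proof -
  have "(\<Sum>i<n. y i * mv n b z i) = (\<Sum>i<n. \<Sum>j<n. y i * b i j * z j)"
    unfolding mv_def by (simp add: sum_distrib_left mult_ac)
  also have "\<dots> = (\<Sum>j<n. \<Sum>i<n. y i * b i j * z j)" by (rule sum.swap)
  also have "\<dots> = (\<Sum>j<n. mv n b y j * z j)"
  proof (rule sum.cong[OF refl])
    fix j assume j: "j \<in> {..<n}"
    have "(\<Sum>i<n. y i * b i j * z j) = (\<Sum>i<n. b j i * y i * z j)"
      by (rule sum.cong) (use assms j in auto)
    thus "(\<Sum>i<n. y i * b i j * z j) = mv n b y j * z j" unfolding mv_def by (simp add: sum_distrib_right)
  qed
  finally show ?thesis .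
qed

lemma mvpow_sym:
  assumes "\<And>i j. i < n \<Longrightarrow> j < n \<Longrightarrow> b i j = b j i"
  shows "(\<Sum>i<n. y i * (mv n b ^^ k) z i) = (\<Sum>i<n. (mv n b ^^ k) y i * z i)"
proof (induction k arbitrary: y z)
  case 0 then show ?case by simp
next
  case (Suc k)
  have "(\<Sum>i<n. y i * (mv n b ^^ Suc k) z i) = (\<Sum>i<n. y i * (mv n b ^^ k) (mv n b z) i)"
    by (simp only: funpow_Suc_right o_def)
  also have "\<dots> = (\<Sum>i<n. (mv n b ^^ k) y i * mv n b z i)" by (rule Suc)
  also have "\<dots> = (\<Sum>i<n. mv n b ((mv n b ^^ k) y) i * z i)"
    by (rule mv_sym) (rule assms)
  finally show ?case by simp
qed

lemma mvpow_nonneg: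
  fixes M :: "nat \<Rightarrow> nat \<Rightarrow> real"
  assumes "\<And>i j. i < n \<Longrightarrow> j < n \<Longrightarrow> 0 \<le> M i j" "\<And>j. j < n \<Longrightarrow> 0 \<le> f j" "i < n"
  shows "0 \<le> (mv n M ^^ k) f i"
proof -
  have "(mv n M ^^ k) (\<lambda>j. 0 * f j) i \<le> (mv n M ^^ k) f i"
    by (rule mvpow_mono[OF assms(1) _ assms(3)]) (use assms(2) in auto)
  moreover have "(mv n M ^^ k) (\<lambda>j. 0 * f j) = (\<lambda>i. 0 * (mv n M ^^ k) f i)" by (rule mvpow_smult)
  ultimately show ?thesis by simp
qed

lemma mvpow_mono_mat:
  fixes M L :: "nat \<Rightarrow> nat \<Rightarrow> real"
  assumes L0: "\<And>i j. i < n \<Longrightarrow> j < n \<Longrightarrow> 0 \<le> L i j"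
    and LM: "\<And>i j. i < n \<Longrightarrow> j < n \<Longrightarrow> L i j \<le> M i j"
    and f: "\<And>j. j < n \<Longrightarrow> 0 \<le> f j" and i: "i < n"
  shows "(mv n L ^^ k) f i \<le> (mv n M ^^ k) f i"
  using f i
proof (induction k arbitrary: f i)
  case 0 then show ?case by simp
next
  case (Suc k)
  have M0: "\<And>i j. i < n \<Longrightarrow> j < n \<Longrightarrow> 0 \<le> M i j" using L0 LM by (meson order_trans)
  have "(mv n L ^^ Suc k) f i = (mv n L ^^ k) (mv n L f) i" by (simp only: funpow_Suc_right o_def)
  also have "\<dots> \<le> (mv n L ^^ k) (mv n M f) i"
  proof (rule mvpow_mono[OF L0 _ Suc.prems(2)])
    fix j assume j: "j < n"
    show "mv n L f j \<le> mv n M f j" unfolding mv_def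
      using LM Suc.prems(1) j by (intro sum_mono mult_right_mono) auto
  qed
  also have "\<dots> \<le> (mv n M ^^ k) (mv n M f) i"
  proof (rule Suc.IH[OF _ Suc.prems(2)])
    fix j assume j: "j < n"
    show "0 \<le> mv n M f j" unfolding mv_def using M0 Suc.prems(1) j by (intro sum_nonneg mult_nonneg_nonneg) auto
  qed
  also have "\<dots> = (mv n M ^^ Suc k) f i" by (simp only: funpow_Suc_right o_def)
  finally show ?case .
qed

lemma trace_sq_bound:
  fixes A :: "real mat"
  assumes A: "A \<in> carrier_mat n n" and n: "n > 0"
    and nn: "\<And>i j. i < n \<Longrightarrow> j < n \<Longrightarrow> 0 \<le> A $$ (i,j)"
    and le1: "\<And>i j. i < n \<Longrightarrow> j < n \<Longrightarrow> A $$ (i,j) \<le> 1"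
  shows "(\<Sum>i<n. \<Sum>j<n. A $$ (i,j) * A $$ (j,i)) \<le> real n * lam_max A"
proof (rule ccontr)
  define a where "a = (\<lambda>i j. A $$ (i,j))"
  define b where "b = (\<lambda>i j. a i j * a j i)"
  define T where "T = (\<Sum>i<n. \<Sum>j<n. A $$ (i,j) * A $$ (j,i))"
  assume "\<not> T \<le> real n * lam_max A"
  hence Tgt: "T > real n * lam_max A" unfolding T_def by simp
  define c where "c = T / real n"
  have c: "c > lam_max A" using Tgt n unfolding c_def by (simp add: field_simps)
  have r0: "lam_max A \<ge> 0" by (rule lam_max_nonneg[OF A n])
  define s where "s = (lam_max A + c) / 2"
  have s: "s > lam_max A" "s < c" "s > 0" using c r0 unfolding s_def by auto
  obtain C where C: "\<And>k y i. i < n \<Longrightarrow> \<bar>(mv n a ^^ k) y i\<bar> \<le> C * s^k * (\<Sum>j<n. \<bar>y j\<bar>)"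
    using growth[OF A n s(1)] unfolding a_def by blast
  have a0: "\<And>i j. i < n \<Longrightarrow> j < n \<Longrightarrow> 0 \<le> a i j" unfolding a_def by (rule nn)
  have b0: "\<And>i j. i < n \<Longrightarrow> j < n \<Longrightarrow> 0 \<le> b i j" unfolding b_def using a0 by simp
  have ba: "\<And>i j. i < n \<Longrightarrow> j < n \<Longrightarrow> b i j \<le> a i j" unfolding b_def a_def
    using nn le1 by (simp add: mult_left_le)
  have bs: "\<And>i j. i < n \<Longrightarrow> j < n \<Longrightarrow> b i j = b j i" unfolding b_def by simp
  define one where "one = (\<lambda>j::nat. 1::real)"
  define S where "S = (\<lambda>k. \<Sum>i<n. (mv n b ^^ k) one i)"
  have S1: "S 1 = real n * c" unfolding S_def c_def T_def b_def a_def one_def mv_def using n by simp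
  have Sdouble: "S (k + k) \<ge> (S k)^2 / real n" for k
  proof -
    have "S (k + k) = (\<Sum>i<n. one i * (mv n b ^^ k) ((mv n b ^^ k) one) i)"
      unfolding S_def one_def by (simp add: funpow_add)
    also have "\<dots> = (\<Sum>i<n. (mv n b ^^ k) one i * (mv n b ^^ k) one i)" by (rule mvpow_sym[OF bs])
    also have "\<dots> = (\<Sum>i<n. ((mv n b ^^ k) one i)^2)" by (simp add: power2_eq_square)
    finally have "S (k + k) = (\<Sum>i<n. ((mv n b ^^ k) one i)^2)" .
    moreover have "(S k)^2 \<le> real n * (\<Sum>i<n. ((mv n b ^^ k) one i)^2)" unfolding S_def by (rule cs_sum)
    ultimately show ?thesis using n by (simp add: field_simps)
  qed
  have c0: "c > 0" using c r0 by simp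
  have Slow: "S (2^m) \<ge> real n * c^(2^m)" for m
  proof (induction m)
    case 0 then show ?case using S1 by simp
  next
    case (Suc m)
    have "real n * c^(2^Suc m) = (real n * c^(2^m))^2 / real n"
      using n by (simp add: power2_eq_square power_mult power_add field_simps mult_2)
    also have "\<dots> \<le> (S (2^m))^2 / real n"
      using Suc c0 by (intro divide_right_mono power_mono) auto
    also have "\<dots> \<le> S (2^m + 2^m)" by (rule Sdouble)
    finally show ?case by (simp add: mult_2)
  qed
  have Sup: "S k \<le> real n * (C * s^k * real n)" for k
  proof -
    have "S k \<le> (\<Sum>i<n. C * s^k * real n)"
      unfolding S_def
    proof (rule sum_mono)
      fix i assume i: "i \<in> {..<n}"
      have "(mv n b ^^ k) one i \<le> (mv n a ^^ k) one i"
        by (rule mvpow_mono_mat[OF b0 ba]) (use i in \<open>auto simp: one_def\<close>)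
      also have "\<dots> \<le> C * s^k * (\<Sum>j<n. \<bar>one j\<bar>)" using C[of i k one] i by simp
      finally show "(mv n b ^^ k) one i \<le> C * s^k * real n" by (simp add: one_def)
    qed
    thus ?thesis by simp
  qed
  define q where "q = c / s - 1"
  have q: "q > 0" unfolding q_def using s by (simp add: field_simps)
  obtain m :: nat where m: "real n * C / q < real m" using reals_Archimedean2 by blast
  have "m < 2^m" by (rule less_exp)
  hence "real m < 2^m" by (metis of_nat_less_iff of_nat_numeral of_nat_power)
  hence "q * real m < q * 2^m" using q by (intro mult_strict_left_mono) auto
  moreover have "real n * C < q * real m" using m q by (simp add: field_simps)
  ultimately have m2: "real n * C < 2^m * q" by (simp add: mult_ac)
  have "1 + real (2^m) * q \<le> (1 + q)^(2^m)" by (rule Bernoulli_inequality) (use q in simp)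
  also have "1 + q = c / s" unfolding q_def by simp
  finally have B: "1 + 2^m * q \<le> (c/s)^(2^m)" by simp
  have "real n * c^(2^m) \<le> real n * (C * s^(2^m) * real n)" using Slow[of m] Sup[of "2^m"] by linarith
  hence "c^(2^m) \<le> C * s^(2^m) * real n" using n by simp
  hence "(c/s)^(2^m) \<le> C * real n" using s by (simp add: power_divide field_simps)
  with B m2 show False by (simp add: mult_ac)
qed



definition ip :: "nat \<Rightarrow> (nat \<Rightarrow> complex) \<Rightarrow> (nat \<Rightarrow> complex) \<Rightarrow> complex" where
  "ip n x y = (\<Sum>i<n. x i * cnj (y i))"

lemma ip_cong: "(\<And>i. i < n \<Longrightarrow> x i = x' i) \<Longrightarrow> (\<And>i. i < n \<Longrightarrow> y i = y' i) \<Longrightarrow> ip n x y = ip n x' y'"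
  unfolding ip_def by (auto intro!: sum.cong)

lemma ip_diff_left: "ip n (\<lambda>i. x i - y i) z = ip n x z - ip n y z"
  unfolding ip_def by (simp add: algebra_simps sum_subtractf)
lemma ip_add_left: "ip n (\<lambda>i. x i + y i) z = ip n x z + ip n y z"
  unfolding ip_def by (simp add: algebra_simps sum.distrib)
lemma ip_scal_left: "ip n (\<lambda>i. c * x i) z = c * ip n x z"
  unfolding ip_def by (simp add: algebra_simps sum_distrib_left)
lemma ip_sum_left: "ip n (\<lambda>i. \<Sum>k<K. f k i) z = (\<Sum>k<K. ip n (f k) z)"
  unfolding ip_def by (simp add: sum_distrib_right sum.swap[of _ "{..<n}"])
lemma ip_swap: "ip n y x = cnj (ip n x y)"
  unfolding ip_def by (simp add: mult.commute)
lemma ip_diff_right: "ip n z (\<lambda>i. x i - y i) = ip n z x - ip n z y"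
  unfolding ip_def by (simp add: algebra_simps sum_subtractf)
lemma ip_scal_right: "ip n z (\<lambda>i. c * x i) = cnj c * ip n z x"
  unfolding ip_def by (simp add: algebra_simps sum_distrib_left)
lemma ip_sum_right: "ip n z (\<lambda>i. \<Sum>k<K. f k i) = (\<Sum>k<K. ip n z (f k))"
  unfolding ip_def by (simp add: sum_distrib_left sum.swap[of _ "{..<n}"])

lemma ip_self: "ip n x x = complex_of_real (\<Sum>i<n. (cmod (x i))^2)"
proof -
  have "ip n x x = (\<Sum>i<n. complex_of_real ((cmod (x i))^2))"
    unfolding ip_def by (rule sum.cong) (simp_all only: complex_norm_square)
  thus ?thesis by simp
qed

lemma ip_self_zero:
  fixes x :: "nat \<Rightarrow> complex"
  assumes "(\<Sum>i<n. (cmod (x i))^2) = 0" "i < n" shows "x i = 0"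
proof -
  have "finite {..<n}" by simp
  hence "\<forall>i\<in>{..<n}. x i = 0"
    using assms(1) sum_nonneg_eq_0_iff[of "{..<n}" "\<lambda>i. (cmod (x i))^2"] by simp
  thus ?thesis using assms(2) by simp
qed

lemma bessel:
  fixes e :: "nat \<Rightarrow> nat \<Rightarrow> complex"
  assumes orth: "\<And>k l. k < K \<Longrightarrow> l < K \<Longrightarrow> ip n (e k) (e l) = (if k = l then 1 else 0)"
  shows "(\<Sum>k<K. (cmod (ip n r (e k)))^2) \<le> (\<Sum>i<n. (cmod (r i))^2)"
proof -
  define c where "c = (\<lambda>k. ip n r (e k))"
  define z where "z = (\<lambda>i. r i - (\<Sum>k<K. c k * e k i))"
  have ez: "ip n (e k) z = 0" if k: "k < K" for k
  proof -
    have "ip n (e k) z = ip n (e k) r - (\<Sum>l<K. cnj (c l) * ip n (e k) (e l))"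
      unfolding z_def ip_diff_right ip_sum_right ip_scal_right by simp
    also have "(\<Sum>l<K. cnj (c l) * ip n (e k) (e l)) = (\<Sum>l<K. if l = k then cnj (c l) else 0)"
      by (rule sum.cong) (use orth k in auto)
    also have "\<dots> = cnj (c k)" using k by simp
    finally show ?thesis unfolding c_def using ip_swap[of n "e k" r] by simp
  qed
  have "ip n (\<lambda>i. r i - (\<Sum>k<K. c k * e k i)) z = ip n r z - (\<Sum>k<K. c k * ip n (e k) z)"
    by (simp only: ip_diff_left ip_sum_left ip_scal_left)
  hence "ip n z z = ip n r z - (\<Sum>k<K. c k * ip n (e k) z)" by (simp only: z_def[symmetric])
  also have "(\<Sum>k<K. c k * ip n (e k) z) = 0" using ez by simp
  also have "ip n r z = ip n r r - (\<Sum>k<K. cnj (c k) * c k)"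
    unfolding z_def ip_diff_right ip_sum_right ip_scal_right c_def by simp
  finally have "ip n z z = ip n r r - (\<Sum>k<K. cnj (c k) * c k)" by simp
  also have "(\<Sum>k<K. cnj (c k) * c k) = complex_of_real (\<Sum>k<K. (cmod (c k))^2)"
  proof -
    have "(\<Sum>k<K. cnj (c k) * c k) = (\<Sum>k<K. complex_of_real ((cmod (c k))^2))"
      by (rule sum.cong) (simp_all only: complex_norm_square mult.commute)
    thus ?thesis by simp
  qed
  finally have "complex_of_real (\<Sum>i<n. (cmod (z i))^2) = complex_of_real ((\<Sum>i<n. (cmod (r i))^2) - (\<Sum>k<K. (cmod (c k))^2))"
    unfolding ip_self by simp
  hence "(\<Sum>i<n. (cmod (z i))^2) = (\<Sum>i<n. (cmod (r i))^2) - (\<Sum>k<K. (cmod (c k))^2)"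
    using of_real_eq_iff by blast
  moreover have "(\<Sum>i<n. (cmod (z i))^2) \<ge> 0" by (simp add: sum_nonneg)
  ultimately show ?thesis unfolding c_def by simp
qed

lemma cs_ip:
  assumes u: "ip n u u = 1"
  shows "(cmod (ip n x u))^2 \<le> (\<Sum>i<n. (cmod (x i))^2)"
  using bessel[of 1 n "\<lambda>k. u" x] u by simp

lemma schur3:
  fixes M :: "nat \<Rightarrow> nat \<Rightarrow> complex" and e :: "nat \<Rightarrow> nat \<Rightarrow> complex"
  assumes orth: "\<And>k l. k < K \<Longrightarrow> l < K \<Longrightarrow> ip n (e k) (e l) = (if k = l then 1 else 0)"
  shows "(\<Sum>k<K. (cmod (ip n (mv n M (e k)) (e k)))^2) \<le> (\<Sum>i<n. \<Sum>j<n. (cmod (M i j))^2)"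
proof -
  define f where "f = (\<lambda>k j. cnj (e k j))"
  have orthf: "ip n (f k) (f l) = (if k = l then 1 else 0)" if "k < K" "l < K" for k l
  proof -
    have "ip n (f k) (f l) = cnj (ip n (e k) (e l))" unfolding f_def ip_def by simp
    thus ?thesis using orth[OF that] by simp
  qed
  have row: "(\<Sum>k<K. (cmod (mv n M (e k) i))^2) \<le> (\<Sum>j<n. (cmod (M i j))^2)" for i
  proof -
    have "mv n M (e k) i = ip n (M i) (f k)" for k unfolding mv_def ip_def f_def by simp
    thus ?thesis using bessel[of K n f "M i", OF orthf] by simp
  qed
  have "(\<Sum>k<K. (cmod (ip n (mv n M (e k)) (e k)))^2) \<le> (\<Sum>k<K. \<Sum>i<n. (cmod (mv n M (e k) i))^2)"
    by (intro sum_mono cs_ip) (use orth in auto)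
  also have "\<dots> = (\<Sum>i<n. \<Sum>k<K. (cmod (mv n M (e k) i))^2)" by (rule sum.swap)
  also have "\<dots> \<le> (\<Sum>i<n. \<Sum>j<n. (cmod (M i j))^2)" by (intro sum_mono row)
  finally show ?thesis .
qed



lemma mv_lincomb:
  "mv n M (\<lambda>j. v j - (\<Sum>l<K. c l * e l j)) i = mv n M v i - (\<Sum>l<K. c l * mv n M (e l) i)"
proof -
  have "mv n M (\<lambda>j. v j - (\<Sum>l<K. c l * e l j)) i = mv n M v i - (\<Sum>j<n. \<Sum>l<K. c l * (M i j * e l j))"
    unfolding mv_def by (simp add: right_diff_distrib sum_subtractf sum_distrib_left mult_ac)
  also have "(\<Sum>j<n. \<Sum>l<K. c l * (M i j * e l j)) = (\<Sum>l<K. c l * mv n M (e l) i)"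
    unfolding mv_def by (subst sum.swap) (simp add: sum_distrib_left)
  finally show ?thesis .
qed

lemma mv_scal: "mv n M (\<lambda>j. c * x j) i = c * mv n M x i"
  unfolding mv_def by (simp add: sum_distrib_left mult_ac)

lemma ip_tri:
  assumes u: "ip n u u = 1" and o: "\<And>l. l < K \<Longrightarrow> ip n (e l) u = 0"
    and eq: "\<And>i. i < n \<Longrightarrow> mv n M u i = nu * u i + (\<Sum>l<K. g l * e l i)"
  shows "ip n (mv n M u) u = nu"
proof -
  have "ip n (mv n M u) u = ip n (\<lambda>i. nu * u i + (\<Sum>l<K. g l * e l i)) u"
    by (rule ip_cong) (use eq in auto)
  also have "\<dots> = nu * ip n u u + (\<Sum>l<K. g l * ip n (e l) u)"
    by (simp only: ip_add_left ip_scal_left ip_sum_left)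
  also have "\<dots> = nu" using u o by simp
  finally show ?thesis .
qed

lemma gs_step:
  fixes M :: "nat \<Rightarrow> nat \<Rightarrow> complex" and e :: "nat \<Rightarrow> nat \<Rightarrow> complex"
  assumes orth: "\<And>k l. k < K \<Longrightarrow> l < K \<Longrightarrow> ip n (e k) (e l) = (if k = l then 1 else 0)"
    and inv: "\<And>k i. k < K \<Longrightarrow> i < n \<Longrightarrow> mv n M (e k) i = (\<Sum>l<K. D k l * e l i)"
    and ev: "\<And>i. i < n \<Longrightarrow> mv n M v i = nu * v i"
    and nz: "i0 < n" "v i0 \<noteq> (\<Sum>l<K. ip n v (e l) * e l i0)"
  shows "\<exists>u g. ip n u u = 1 \<and> (\<forall>k<K. ip n u (e k) = 0 \<and> ip n (e k) u = 0)
     \<and> (\<forall>i<n. mv n M u i = nu * u i + (\<Sum>l<K. g l * e l i))"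
proof -
  define c where "c = (\<lambda>l. ip n v (e l))"
  define z where "z = (\<lambda>i. v i - (\<Sum>l<K. c l * e l i))"
  have zo: "ip n z (e k) = 0" if k: "k < K" for k
  proof -
    have "ip n z (e k) = ip n v (e k) - (\<Sum>l<K. c l * ip n (e l) (e k))"
      unfolding z_def by (simp only: ip_diff_left ip_sum_left ip_scal_left)
    also have "(\<Sum>l<K. c l * ip n (e l) (e k)) = (\<Sum>l<K. if l = k then c l else 0)"
      by (rule sum.cong) (use orth k in auto)
    also have "\<dots> = c k" using k by simp
    finally show ?thesis unfolding c_def by simp
  qed
  define ss where "ss = (\<Sum>i<n. (cmod (z i))^2)"
  have ss0: "ss \<ge> 0" unfolding ss_def by (simp add: sum_nonneg)
  have "ss \<noteq> 0"
  proof
    assume "ss = 0"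
    hence "z i0 = 0" using ip_self_zero[of z n i0] nz(1) unfolding ss_def by simp
    thus False using nz(2) unfolding z_def c_def by simp
  qed
  hence ssp: "ss > 0" using ss0 by simp
  define q where "q = sqrt ss"
  have q: "q > 0" "q^2 = ss" unfolding q_def using ssp by auto
  define u where "u = (\<lambda>i. complex_of_real (1/q) * z i)"
  have uu: "ip n u u = 1"
  proof -
    have "ip n u u = complex_of_real (1/q) * complex_of_real (1/q) * ip n z z"
      unfolding u_def by (simp only: ip_scal_left ip_scal_right complex_cnj_complex_of_real mult.assoc)
    also have "ip n z z = complex_of_real ss" unfolding ss_def by (rule ip_self)
    also have "complex_of_real (1/q) * complex_of_real (1/q) * complex_of_real ss = complex_of_real (ss / q^2)"
      by (simp add: power2_eq_square)
    also have "ss / q^2 = 1" using q ssp by simp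
    finally show ?thesis by simp
  qed
  have uo: "ip n u (e k) = 0" "ip n (e k) u = 0" if "k < K" for k
  proof -
    show "ip n u (e k) = 0" unfolding u_def ip_scal_left using zo[OF that] by simp
    thus "ip n (e k) u = 0" using ip_swap[of n "e k" u] by simp
  qed
  define g where "g = (\<lambda>m. complex_of_real (1/q) * (nu * c m - (\<Sum>l<K. c l * D l m)))"
  have Mu: "mv n M u i = nu * u i + (\<Sum>m<K. g m * e m i)" if i: "i < n" for i
  proof -
    have "mv n M u i = complex_of_real (1/q) * mv n M z i" unfolding u_def by (rule mv_scal)
    also have "mv n M z i = mv n M v i - (\<Sum>l<K. c l * mv n M (e l) i)" unfolding z_def by (rule mv_lincomb)
    also have "\<dots> = nu * v i - (\<Sum>l<K. c l * (\<Sum>m<K. D l m * e m i))"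
      using ev[OF i] inv i by simp
    also have "(\<Sum>l<K. c l * (\<Sum>m<K. D l m * e m i)) = (\<Sum>m<K. (\<Sum>l<K. c l * D l m) * e m i)"
    proof -
      have "(\<Sum>l<K. c l * (\<Sum>m<K. D l m * e m i)) = (\<Sum>l<K. \<Sum>m<K. c l * D l m * e m i)"
        by (simp add: sum_distrib_left mult_ac)
      also have "\<dots> = (\<Sum>m<K. \<Sum>l<K. c l * D l m * e m i)" by (rule sum.swap)
      also have "\<dots> = (\<Sum>m<K. (\<Sum>l<K. c l * D l m) * e m i)" by (simp add: sum_distrib_right)
      finally show ?thesis .
    qed
    also have "v i = z i + (\<Sum>m<K. c m * e m i)" unfolding z_def by simp
    finally have "mv n M u i = complex_of_real (1/q) * (nu * (z i + (\<Sum>m<K. c m * e m i)) - (\<Sum>m<K. (\<Sum>l<K. c l * D l m) * e m i))" .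
    also have "\<dots> = nu * (complex_of_real (1/q) * z i) + (\<Sum>m<K. (complex_of_real (1/q) * (nu * c m - (\<Sum>l<K. c l * D l m))) * e m i)"
      by (simp add: distrib_left right_diff_distrib sum_distrib_left sum_subtractf mult_ac)
    finally show ?thesis unfolding u_def g_def .
  qed
  show ?thesis using uu uo Mu by blast
qed



lemma sum_lt1: "(\<Sum>l<(1::nat). f l) = f 0" by simp
lemma sum_lt2: "(\<Sum>l<(2::nat). f l) = f 0 + f 1" by (simp add: numeral_2_eq_2)

lemma three_eig:
  fixes M :: "nat \<Rightarrow> nat \<Rightarrow> complex"
  assumes d12: "l1 \<noteq> l2" and d13: "l1 \<noteq> l3" and d23: "l2 \<noteq> l3"
    and v1: "i1 < n" "v1 i1 \<noteq> 0" "\<And>i. i < n \<Longrightarrow> mv n M v1 i = l1 * v1 i"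
    and v2: "i2 < n" "v2 i2 \<noteq> 0" "\<And>i. i < n \<Longrightarrow> mv n M v2 i = l2 * v2 i"
    and v3: "i3 < n" "v3 i3 \<noteq> 0" "\<And>i. i < n \<Longrightarrow> mv n M v3 i = l3 * v3 i"
  shows "\<exists>e. (\<forall>k l. k < (3::nat) \<longrightarrow> l < 3 \<longrightarrow> ip n (e k) (e l) = (if k = l then 1 else 0))
     \<and> ip n (mv n M (e 0)) (e 0) = l1 \<and> ip n (mv n M (e 1)) (e 1) = l2 \<and> ip n (mv n M (e 2)) (e 2) = l3"
proof -
  obtain u1 g1 where u1: "ip n u1 u1 = 1" "\<forall>i<n. mv n M u1 i = l1 * u1 i + (\<Sum>l<0. g1 l * (undefined::nat\<Rightarrow>nat\<Rightarrow>complex) l i)"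
    using gs_step[of 0 n "undefined::nat\<Rightarrow>nat\<Rightarrow>complex" M undefined v1 l1 i1] v1 by auto
  have Mu1: "mv n M u1 i = l1 * u1 i" if "i < n" for i using u1(2) that by simp
  have nz2: "\<exists>i0<n. v2 i0 \<noteq> ip n v2 u1 * u1 i0"
  proof (rule ccontr)
    assume "\<not> ?thesis"
    hence eq: "\<And>i. i < n \<Longrightarrow> v2 i = ip n v2 u1 * u1 i" by simp
    have "(l2 - l1) * v2 i = 0" if i: "i < n" for i
    proof -
      have "l2 * v2 i = mv n M v2 i" using v2(3)[OF i] by simp
      also have "\<dots> = mv n M (\<lambda>j. ip n v2 u1 * u1 j) i" by (rule mv_cong) (use eq in auto)
      also have "\<dots> = ip n v2 u1 * (l1 * u1 i)" by (simp only: mv_scal Mu1[OF i])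
      also have "\<dots> = l1 * v2 i" using eq[OF i] by simp
      finally show ?thesis by (simp add: algebra_simps)
    qed
    hence "v2 i2 = 0" using d12 v2(1) by simp
    with v2(2) show False by simp
  qed
  then obtain i0 where i0: "i0 < n" "v2 i0 \<noteq> (\<Sum>l<(1::nat). ip n v2 ((\<lambda>k::nat. u1) l) * (\<lambda>k::nat. u1) l i0)"
    unfolding sum_lt1 by auto
  obtain u2 g2 where u2: "ip n u2 u2 = 1" "ip n u2 u1 = 0" "ip n u1 u2 = 0"
     "\<forall>i<n. mv n M u2 i = l2 * u2 i + g2 * u1 i"
  proof -
    from gs_step[of 1 n "\<lambda>k. u1" M "\<lambda>k l. l1" v2 l2 i0] u1(1) Mu1 v2(3) i0
    obtain u g where "ip n u u = 1" "\<forall>k<(1::nat). ip n u u1 = 0 \<and> ip n u1 u = 0"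
      "\<forall>i<n. mv n M u i = l2 * u i + (\<Sum>l<(1::nat). g l * u1 i)" by auto
    thus ?thesis using that[of u "g 0"] by auto
  qed
  have u21: "ip n u2 u1 = 0" "ip n u1 u2 = 0" using u2 by auto
  have Mu2: "mv n M u2 i = l2 * u2 i + g2 * u1 i" if "i < n" for i using u2(4) that by simp
  define e2 where "e2 = (\<lambda>k::nat. if k = 0 then u1 else u2)"
  have orth2: "ip n (e2 k) (e2 l) = (if k = l then 1 else 0)" if "k < 2" "l < 2" for k l
    using that u1(1) u2(1) u21 unfolding e2_def by (auto simp: less_2_cases_iff)
  define D where "D = (\<lambda>(k::nat) (l::nat). if k = 0 then (if l = 0 then l1 else 0) else (if l = 0 then g2 else l2))"
  have inv2: "mv n M (e2 k) i = (\<Sum>l<2. D k l * e2 l i)" if "k < 2" "i < n" for k i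
    using that Mu1 Mu2 unfolding e2_def D_def sum_lt2 by (auto simp: less_2_cases_iff)
  have nz3: "\<exists>i0<n. v3 i0 \<noteq> (\<Sum>l<2. ip n v3 (e2 l) * e2 l i0)"
  proof (rule ccontr)
    assume "\<not> ?thesis"
    hence eq: "\<And>i. i < n \<Longrightarrow> v3 i = ip n v3 u1 * u1 i + ip n v3 u2 * u2 i"
      unfolding e2_def sum_lt2 by simp
    define c1 where "c1 = ip n v3 u1"
    define c2 where "c2 = ip n v3 u2"
    define w where "w = (\<lambda>i. mv n M v3 i - l2 * v3 i)"
    define be where "be = c1 * (l1 - l2) + c2 * g2"
    have w1: "w i = (l3 - l2) * v3 i" if "i < n" for i unfolding w_def using v3(3)[OF that] by (simp add: algebra_simps)
    have w2: "w i = be * u1 i" if i: "i < n" for i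
    proof -
      have "mv n M v3 i = mv n M (\<lambda>j. c1 * u1 j + c2 * u2 j) i"
        by (rule mv_cong) (use eq in \<open>auto simp: c1_def c2_def\<close>)
      also have "\<dots> = c1 * mv n M u1 i + c2 * mv n M u2 i" by (simp only: mv_lin)
      finally have "mv n M v3 i = c1 * (l1 * u1 i) + c2 * (l2 * u2 i + g2 * u1 i)"
        using Mu1[OF i] Mu2[OF i] by simp
      thus ?thesis unfolding w_def be_def using eq[OF i] unfolding c1_def[symmetric] c2_def[symmetric]
        by (simp add: algebra_simps)
    qed
    have "(l3 - l2) * (l3 - l1) * v3 i = 0" if i: "i < n" for i
    proof -
      have "mv n M w i = mv n M (\<lambda>j. (l3 - l2) * v3 j) i" by (rule mv_cong) (use w1 in auto)
      also have "\<dots> = (l3 - l2) * (l3 * v3 i)" by (simp only: mv_scal v3(3)[OF i])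
      finally have a0: "mv n M w i = (l3 - l2) * (l3 * v3 i)" .
      have a: "mv n M w i - l1 * w i = (l3 - l2) * (l3 - l1) * v3 i"
        unfolding a0 w1[OF i] by (simp add: algebra_simps)
      have "mv n M w i = mv n M (\<lambda>j. be * u1 j) i" by (rule mv_cong) (use w2 in auto)
      also have "\<dots> = be * (l1 * u1 i)" by (simp only: mv_scal Mu1[OF i])
      finally have b0: "mv n M w i = be * (l1 * u1 i)" .
      have b: "mv n M w i - l1 * w i = 0" unfolding b0 w2[OF i] by (simp add: algebra_simps)
      show ?thesis using a b by simp
    qed
    hence "v3 i3 = 0" using d13 d23 v3(1) by simp
    with v3(2) show False by simp
  qed
  then obtain i0' where i0': "i0' < n" "v3 i0' \<noteq> (\<Sum>l<2. ip n v3 (e2 l) * e2 l i0')" by auto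
  obtain u3 g3 where u3: "ip n u3 u3 = 1" "\<forall>k<2. ip n u3 (e2 k) = 0 \<and> ip n (e2 k) u3 = 0"
     "\<forall>i<n. mv n M u3 i = l3 * u3 i + (\<Sum>l<2. g3 l * e2 l i)"
    using gs_step[of 2 n e2 M D v3 l3 i0', OF orth2 inv2 v3(3) i0'] by blast
  have u31: "ip n u3 u1 = 0" "ip n u1 u3 = 0" "ip n u3 u2 = 0" "ip n u2 u3 = 0"
    using u3(2) unfolding e2_def by (auto dest: spec[of _ 0] spec[of _ 1])
  define e where "e = (\<lambda>k::nat. if k = 0 then u1 else if k = 1 then u2 else u3)"
  have orth: "\<forall>k l. k < 3 \<longrightarrow> l < 3 \<longrightarrow> ip n (e k) (e l) = (if k = l then 1 else 0)"
  proof (intro allI impI)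
    fix k l :: nat assume "k < 3" "l < 3"
    hence "k \<in> {0,1,2}" "l \<in> {0,1,2}" by auto
    thus "ip n (e k) (e l) = (if k = l then 1 else 0)"
      using u1(1) u2(1) u3(1) u21 u31 unfolding e_def by auto
  qed
  have r1: "ip n (mv n M u1) u1 = l1"
    by (rule ip_tri[of n u1 0 "undefined" M l1 "\<lambda>l. 0"]) (use u1(1) Mu1 in auto)
  have r2: "ip n (mv n M u2) u2 = l2"
  proof -
    have "ip n (mv n M u2) u2 = ip n (\<lambda>i. l2 * u2 i + g2 * u1 i) u2" by (rule ip_cong) (use Mu2 in auto)
    also have "\<dots> = l2 * ip n u2 u2 + g2 * ip n u1 u2" by (simp only: ip_add_left ip_scal_left)
    finally show ?thesis using u2(1) u21 by simp
  qed
  have r3: "ip n (mv n M u3) u3 = l3"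
    by (rule ip_tri[of n u3 2 e2 M l3 g3]) (use u3 in auto)
  have "e 0 = u1" "e 1 = u2" "e 2 = u3" unfolding e_def by auto
  thus ?thesis using orth r1 r2 r3 by (intro exI[of _ e]) auto
qed



lemma sum_swap_sq: "(\<Sum>i<n. \<Sum>j<n. (f j i :: real)) = (\<Sum>i<n. \<Sum>j<n. f i j)"
  by (rule sum.swap)

lemma gamma_eq:
  "gamma_val n A = real n * lam_max A + real n ^ 2 - 2 * (\<Sum>i<n. \<Sum>j<n. (A $$ (i,j))^2)"
proof -
  define F where "F = (\<Sum>i<n. \<Sum>j<n. (A $$ (i,j))^2)"
  define S where "S = (\<Sum>i<n. \<Sum>j<n. min (A $$ (i,j)) (A $$ (j,i)))"
  have F': "(\<Sum>i<n. \<Sum>j<n. (A $$ (j,i))^2) = F" unfolding F_def by (rule sum.swap)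
  have "(\<Sum>i<n. \<Sum>j<n. 1 + min (A $$ (i,j)) (A $$ (j,i)) - (A $$ (i,j))^2 - (A $$ (j,i))^2)
      = (\<Sum>i<n. \<Sum>j<n. (1::real)) + S - F - (\<Sum>i<n. \<Sum>j<n. (A $$ (j,i))^2)"
    unfolding S_def F_def by (simp add: sum.distrib sum_subtractf)
  also have "(\<Sum>i<n. \<Sum>j<n. (1::real)) = real n ^ 2" by (simp add: power2_eq_square)
  finally show ?thesis unfolding gamma_val_def F' S_def[symmetric] F_def[symmetric] by simp
qed

lemma pair_ineq:
  fixes a b :: real
  assumes "0 \<le> a" "a \<le> 1" "0 \<le> b" "b \<le> 1"
  shows "a^2 + b^2 \<le> 1 + a * b"
proof -
  have 1: "0 \<le> (1 - a^2) * (1 - b^2)" using assms by (intro mult_nonneg_nonneg) (auto simp: power_le_one)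
  have 2: "0 \<le> a * b * (1 - a * b)" using assms by (intro mult_nonneg_nonneg) (auto simp: mult_le_one)
  show ?thesis using 1 2 by (simp add: algebra_simps power2_eq_square)
qed

lemma ip_herm:
  fixes a :: "nat \<Rightarrow> nat \<Rightarrow> real"
  shows "ip n (mv n (\<lambda>i j. complex_of_real ((a i j + a j i) / 2)) u) u
       = complex_of_real (Re (ip n (mv n (\<lambda>i j. complex_of_real (a i j)) u) u))"
proof -
  define X where "X = ip n (mv n (\<lambda>i j. complex_of_real (a i j)) u) u"
  have X: "X = (\<Sum>i<n. \<Sum>j<n. complex_of_real (a i j) * u j * cnj (u i))"
    unfolding X_def ip_def mv_def by (simp add: sum_distrib_right)
  have C: "cnj X = (\<Sum>i<n. \<Sum>j<n. complex_of_real (a i j) * cnj (u j) * u i)" unfolding X by simp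
  have Y: "(\<Sum>i<n. \<Sum>j<n. complex_of_real (a j i) * u j * cnj (u i)) = cnj X"
  proof -
    have "(\<Sum>i<n. \<Sum>j<n. complex_of_real (a j i) * u j * cnj (u i)) = (\<Sum>j<n. \<Sum>i<n. complex_of_real (a j i) * u j * cnj (u i))"
      by (rule sum.swap)
    also have "\<dots> = (\<Sum>i<n. \<Sum>j<n. complex_of_real (a i j) * cnj (u j) * u i)"
      by (intro sum.cong refl) (simp add: mult_ac)
    finally show ?thesis unfolding C .
  qed
  have "ip n (mv n (\<lambda>i j. complex_of_real ((a i j + a j i) / 2)) u) u
      = (\<Sum>i<n. \<Sum>j<n. (complex_of_real (a i j) * u j * cnj (u i) + complex_of_real (a j i) * u j * cnj (u i)) / 2)"
    unfolding ip_def mv_def by (simp add: sum_distrib_right sum_distrib_left algebra_simps add_divide_distrib)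
  also have "\<dots> = (X + cnj X) / 2" unfolding Y[symmetric] unfolding X
    by (simp add: sum.distrib sum_divide_distrib[symmetric])
  also have "\<dots> = complex_of_real (Re X)" by (simp add: complex_add_cnj)
  finally show ?thesis unfolding X_def .
qed



theorem lemma3:
  fixes A :: "real mat" and n :: nat
  assumes "A \<in> carrier_mat n n" and "n > 0"
    and "\<And>i j. i < n \<Longrightarrow> j < n \<Longrightarrow> 0 \<le> A $$ (i,j)"
    and "\<And>i j. i < n \<Longrightarrow> j < n \<Longrightarrow> A $$ (i,j) \<le> 1"
  shows "gamma_val n A \<ge> 0 \<and>
    (\<forall>\<mu>. eigenvalue (map_mat complex_of_real A) \<mu> \<and> Im \<mu> \<noteq> 0 \<longrightarrow>
       (cmod \<mu>)^2 \<le> min ((real n ^ 2 + real n * lam_max A - 2 * (lam_max A)^2 - gamma_val n A) / 4)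
                          ((lam_max A)^2)
     \<and> (Re \<mu>)^2 \<le> min ((real n ^ 2 + 3 * real n * lam_max A - 4 * (lam_max A)^2 - gamma_val n A) / 8)
                          ((lam_max A)^2))"
proof -
  note A = assms(1) and n = assms(2) and nn = assms(3) and le1 = assms(4)
  define r where "r = lam_max A"
  define F where "F = (\<Sum>i<n. \<Sum>j<n. (A $$ (i,j))^2)"
  define T where "T = (\<Sum>i<n. \<Sum>j<n. A $$ (i,j) * A $$ (j,i))"
  have r0: "r \<ge> 0" unfolding r_def by (rule lam_max_nonneg[OF A n])
  have geq: "gamma_val n A = real n * r + real n ^ 2 - 2 * F"
    unfolding r_def F_def by (rule gamma_eq)
  have TF: "2 * F \<le> real n ^ 2 + T"
  proof -
    have "2 * F = (\<Sum>i<n. \<Sum>j<n. (A $$ (i,j))^2 + (A $$ (j,i))^2)"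
      unfolding F_def by (simp add: sum.distrib sum.swap[of "\<lambda>i j. (A $$ (j,i))^2"])
    also have "\<dots> \<le> (\<Sum>i<n. \<Sum>j<n. 1 + A $$ (i,j) * A $$ (j,i))"
      by (intro sum_mono pair_ineq) (auto intro: nn le1)
    also have "\<dots> = real n ^ 2 + T" unfolding T_def by (simp add: sum.distrib power2_eq_square)
    finally show ?thesis .
  qed
  have Tr: "T \<le> real n * r" unfolding T_def r_def by (rule trace_sq_bound[OF A n nn le1])
  have g0: "gamma_val n A \<ge> 0" using geq TF Tr by linarith
  define M where "M = (\<lambda>i j. complex_of_real (A $$ (i,j)))"
  define H where "H = (\<lambda>i j. complex_of_real ((A $$ (i,j) + A $$ (j,i)) / 2))"
  let ?Ac = "map_mat complex_of_real A"
  have Ac: "?Ac \<in> carrier_mat n n" using A by simp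
  have main: "(cmod mu)^2 \<le> min ((real n ^ 2 + real n * r - 2 * r^2 - gamma_val n A) / 4) (r^2)
     \<and> (Re mu)^2 \<le> min ((real n ^ 2 + 3 * real n * r - 4 * r^2 - gamma_val n A) / 8) (r^2)"
    if ev: "eigenvalue ?Ac mu" and im: "Im mu \<noteq> 0" for mu
  proof -
    have mur: "cmod mu \<le> r" unfolding r_def by (rule lam_max_ge[OF A n ev])
    hence mu2: "(cmod mu)^2 \<le> r^2" by (intro power_mono) auto
    have re2: "(Re mu)^2 \<le> (cmod mu)^2"
      using abs_Re_le_cmod[of mu] by (metis abs_ge_zero power2_abs power_mono)
    obtain w i1 where w: "i1 < n" "w i1 \<noteq> 0" "\<And>i. i < n \<Longrightarrow> mv n (\<lambda>i j. A $$ (i,j)) w i = r * w i"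
      using pf_main[OF A n nn] unfolding r_def by blast
    define v1 where "v1 = (\<lambda>i. complex_of_real (w i))"
    have v1: "v1 i1 \<noteq> 0" "\<And>i. i < n \<Longrightarrow> mv n M v1 i = complex_of_real r * v1 i"
    proof -
      show "v1 i1 \<noteq> 0" using w unfolding v1_def by simp
      fix i assume i: "i < n"
      have "mv n M v1 i = complex_of_real (mv n (\<lambda>i j. A $$ (i,j)) w i)" unfolding mv_def M_def v1_def by simp
      thus "mv n M v1 i = complex_of_real r * v1 i" using w(3)[OF i] unfolding v1_def by simp
    qed
    obtain v where v: "v \<in> carrier_vec n" "v \<noteq> 0\<^sub>v n" "?Ac *\<^sub>v v = mu \<cdot>\<^sub>v v"
      using eigvec_fun[OF Ac ev] by blast
    define v2 where "v2 = (\<lambda>i. v $ i)"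
    obtain i2 where i2: "i2 < n" "v2 i2 \<noteq> 0"
    proof (rule ccontr)
      assume "\<not> thesis"
      with that have "\<And>i. i < n \<Longrightarrow> v $ i = 0" unfolding v2_def by blast
      hence "v = 0\<^sub>v n" using v(1) by (intro eq_vecI) auto
      with v(2) show False by simp
    qed
    have vv: "v = vec n v2" using v(1) unfolding v2_def by auto
    have Mv2: "mv n M v2 i = mu * v2 i" if i: "i < n" for i
    proof -
      have "mv n M v2 i = mv n (\<lambda>i j. ?Ac $$ (i,j)) v2 i" unfolding mv_def M_def using A i by simp
      also have "\<dots> = (?Ac *\<^sub>v vec n v2) $ i" by (rule mat_vec_fun[OF Ac i, symmetric])
      also have "\<dots> = mu * v2 i" using v(3) vv i v(1) unfolding v2_def by simp
      finally show ?thesis .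
    qed
    define v3 where "v3 = (\<lambda>i. cnj (v2 i))"
    have Mv3: "mv n M v3 i = cnj mu * v3 i" if i: "i < n" for i
    proof -
      have "mv n M v3 i = cnj (mv n M v2 i)" unfolding mv_def M_def v3_def by simp
      thus ?thesis using Mv2[OF i] unfolding v3_def by simp
    qed
    have v3nz: "v3 i2 \<noteq> 0" using i2 unfolding v3_def by simp
    have d12: "complex_of_real r \<noteq> mu" using im by auto
    have d13: "complex_of_real r \<noteq> cnj mu"
    proof
      assume h: "complex_of_real r = cnj mu"
      have "Im (cnj mu) = 0" unfolding h[symmetric] by simp
      thus False using im by simp
    qed
    have d23: "mu \<noteq> cnj mu"
    proof
      assume h: "mu = cnj mu"
      have "Im mu = Im (cnj mu)" using h by simp
      thus False using im by simp
    qed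
    obtain e where e: "\<forall>k l. k < (3::nat) \<longrightarrow> l < 3 \<longrightarrow> ip n (e k) (e l) = (if k = l then 1 else 0)"
      "ip n (mv n M (e 0)) (e 0) = complex_of_real r" "ip n (mv n M (e 1)) (e 1) = mu"
      "ip n (mv n M (e 2)) (e 2) = cnj mu"
      using three_eig[OF d12 d13 d23 w(1) v1(1) v1(2) i2 Mv2 i2(1) v3nz Mv3] by blast
    have orth: "\<And>k l. k < 3 \<Longrightarrow> l < 3 \<Longrightarrow> ip n (e k) (e l) = (if k = l then 1 else 0)" using e(1) by blast
    have s3: "(\<Sum>k<(3::nat). f k) = f 0 + f 1 + f 2" for f :: "nat \<Rightarrow> real"
      by (simp add: numeral_3_eq_3 numeral_2_eq_2)
    have "(\<Sum>k<3. (cmod (ip n (mv n M (e k)) (e k)))^2) \<le> (\<Sum>i<n. \<Sum>j<n. (cmod (M i j))^2)"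
      by (rule schur3[OF orth])
    hence SM: "r^2 + 2 * (cmod mu)^2 \<le> F"
    proof -
      assume h: "(\<Sum>k<3. (cmod (ip n (mv n M (e k)) (e k)))^2) \<le> (\<Sum>i<n. \<Sum>j<n. (cmod (M i j))^2)"
      have "(\<Sum>k<3. (cmod (ip n (mv n M (e k)) (e k)))^2) = r^2 + 2 * (cmod mu)^2"
        unfolding s3 using e(2-4) r0 by simp
      moreover have "(\<Sum>i<n. \<Sum>j<n. (cmod (M i j))^2) = F" unfolding F_def M_def by simp
      ultimately show ?thesis using h by simp
    qed
    have Hr: "ip n (mv n H u) u = complex_of_real (Re (ip n (mv n M u) u))" for u
      unfolding H_def M_def by (rule ip_herm)
    have "(\<Sum>k<3. (cmod (ip n (mv n H (e k)) (e k)))^2) \<le> (\<Sum>i<n. \<Sum>j<n. (cmod (H i j))^2)"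
      by (rule schur3[OF orth])
    hence SH0: "r^2 + 2 * (Re mu)^2 \<le> (\<Sum>i<n. \<Sum>j<n. ((A $$ (i,j) + A $$ (j,i)) / 2)^2)"
    proof -
      assume h: "(\<Sum>k<3. (cmod (ip n (mv n H (e k)) (e k)))^2) \<le> (\<Sum>i<n. \<Sum>j<n. (cmod (H i j))^2)"
      have "(\<Sum>k<3. (cmod (ip n (mv n H (e k)) (e k)))^2) = r^2 + 2 * (Re mu)^2"
        unfolding s3 Hr using e(2-4) r0 by simp
      moreover have "(\<Sum>i<n. \<Sum>j<n. (cmod (H i j))^2) = (\<Sum>i<n. \<Sum>j<n. ((A $$ (i,j) + A $$ (j,i)) / 2)^2)"
        unfolding H_def norm_of_real power2_abs ..
      ultimately show ?thesis using h by simp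
    qed
    have "(\<Sum>i<n. \<Sum>j<n. ((A $$ (i,j) + A $$ (j,i)) / 2)^2)
        = ((\<Sum>i<n. \<Sum>j<n. (A $$ (i,j))^2) + (\<Sum>i<n. \<Sum>j<n. (A $$ (j,i))^2) + 2 * T) / 4"
    proof -
      have pt: "((x + y) / 2)^2 = (x^2 + y^2 + 2 * (x * y)) / 4" for x y :: real
        by (simp add: power2_eq_square field_simps)
      show ?thesis unfolding T_def
        by (simp only: pt sum_divide_distrib[symmetric] sum.distrib sum_distrib_left[symmetric])
    qed
    also have "(\<Sum>i<n. \<Sum>j<n. (A $$ (j,i))^2) = F" unfolding F_def by (rule sum.swap)
    finally have SH: "r^2 + 2 * (Re mu)^2 \<le> (2 * F + 2 * T) / 4" using SH0 unfolding F_def by simp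
    show ?thesis
    proof (intro conjI)
      show "(cmod mu)^2 \<le> min ((real n ^ 2 + real n * r - 2 * r^2 - gamma_val n A) / 4) (r^2)"
        using SM mu2 unfolding geq by simp
      show "(Re mu)^2 \<le> min ((real n ^ 2 + 3 * real n * r - 4 * r^2 - gamma_val n A) / 8) (r^2)"
      proof (rule min.boundedI)
        have h: "4 * r^2 + 8 * (Re mu)^2 \<le> 2 * F + 2 * T" using SH by simp
        have Tr': "T \<le> r * real n" using Tr by (simp add: mult.commute)
        have "(Re mu)^2 * 8 \<le> 2 * (r * real n) + (2 * F - 4 * r^2)" using h Tr' by linarith
        thus "(Re mu)^2 \<le> (real n ^ 2 + 3 * real n * r - 4 * r^2 - gamma_val n A) / 8"
          unfolding geq by simp
        show "(Re mu)^2 \<le> r^2" using re2 mu2 by linarith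
      qed
    qed
  qed
  show ?thesis using g0 main unfolding r_def by blast
qed

end
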